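(* Let $M$ be an $n\times n$ matrix with entries in $K(x)$ which is Fuchsian and normalized (with respect to a normalization $N_{x_0}$ chosen for each point $x_0$) at every finite point $x_0\in K$. Let $T$ be an invertible $n\times n$ matrix with entries in $K(x)$ such that $M_T=T^{-1}(MT-\partial_xT)$ is Fuchsian and normalized (with respect to the same $N_{x_0}$) at every finite point $x_0\in K$. Then the entries of $T$ and of $T^{-1}$ are polynomials in $x$, and $\det T$ is a nonzero constant (independent of $x$). If moreover both $M$ and $M_T$ are Fuchsian and normalized (with respect to the same normalization $N_\infty$) also at $x=\infty$, then $T$ is a constant matrix.
   Context: Let $K$ be an algebraically closed field of characteristic zero (e.g. $\mathbb{C}$ or an algebraic closure of $\mathbb{C}(\epsilon)$). For a finite point $x_0\in K$, a matrix $M$ with entries in $K(x)$ is called Fuchsian at $x_0$ if $M(x)=\frac{A}{x-x_0}+O((x-x_0)^0)$ for a constant matrix $A$, called the matrix residue at $x_0$. $M$ is Fuchsian at $\infty$ with residue $A$ if $-y^{-2}M(1/y)$ is Fuchsian at $y=0$ with residue $A$. A normalization is a subset $N\subset K$ containing exactly one element of each coset $\lambda+\mathbb{Z}$; $M$ Fuchsian at $x_0$ is normalized at $x_0$ with respect to $N$ if all eigenvalues of its residue at $x_0$ lie in $N$. *)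

theory Defs
  imports "HOL-Computational_Algebra.Polynomial_Factorial"
          "HOL-Computational_Algebra.Fraction_Field"
          "Jordan_Normal_Form.Determinant"
          "Jordan_Normal_Form.Char_Poly"
begin

text \<open>Rational functions K(x) are modelled as the fraction field \<open>'a poly fract\<close>.
  \<open>rnum r / rden r\<close> is some (arbitrarily chosen) representation \<open>r = p / q\<close>, \<open>q \<noteq> 0\<close>;
  the operations below do not depend on the choice.\<close>

type_synonym 'a ratfun = "'a poly fract"

definition rrep :: "'a::field ratfun \<Rightarrow> 'a poly \<times> 'a poly" where
  "rrep r = (SOME pq. snd pq \<noteq> 0 \<and> r = Fract (fst pq) (snd pq))"

definition rnum :: "'a::field ratfun \<Rightarrow> 'a poly" where
  "rnum r = fst (rrep r)"

definition rden :: "'a::field ratfun \<Rightarrow> 'a poly" where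
  "rden r = snd (rrep r)"

definition regular_at :: "'a::field \<Rightarrow> 'a ratfun \<Rightarrow> bool" where
  "regular_at x0 r \<longleftrightarrow> (\<exists>p q. poly q x0 \<noteq> 0 \<and> r = Fract p q)"

definition eval_at :: "'a::field \<Rightarrow> 'a ratfun \<Rightarrow> 'a" where
  "eval_at x0 r = (SOME v. \<exists>p q. poly q x0 \<noteq> 0 \<and> r = Fract p q \<and> v = poly p x0 / poly q x0)"

definition rderiv :: "'a::field ratfun \<Rightarrow> 'a ratfun" where
  "rderiv r = Fract (pderiv (rnum r) * rden r - rnum r * pderiv (rden r)) (rden r * rden r)"

text \<open>Substitution x := 1/y: for r = p/q, r(1/y) = (rev p * y^deg q) / (rev q * y^deg p).\<close>
definition subst_inv :: "'a::field ratfun \<Rightarrow> 'a ratfun" where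
  "subst_inv r = Fract (reflect_poly (rnum r) * monom 1 (degree (rden r)))
                       (reflect_poly (rden r) * monom 1 (degree (rnum r)))"

definition rX :: "'a::field ratfun" where "rX = to_fract [:0, 1:]"
definition rconst :: "'a::field \<Rightarrow> 'a ratfun" where "rconst c = to_fract [:c:]"

definition mat_deriv :: "'a::field ratfun mat \<Rightarrow> 'a ratfun mat" where
  "mat_deriv T = map_mat rderiv T"

definition fuchsian_at :: "'a::field \<Rightarrow> 'a ratfun mat \<Rightarrow> bool" where
  "fuchsian_at x0 M \<longleftrightarrow>
     (\<forall>i < dim_row M. \<forall>j < dim_col M. regular_at x0 ((rX - rconst x0) * M $$ (i, j)))"

definition residue_at :: "'a::field \<Rightarrow> 'a ratfun mat \<Rightarrow> 'a mat" where
  "residue_at x0 M = map_mat (\<lambda>r. eval_at x0 ((rX - rconst x0) * r)) M"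

definition at_infinity_transform :: "'a::field ratfun mat \<Rightarrow> 'a ratfun mat" where
  "at_infinity_transform M = map_mat (\<lambda>r. - (subst_inv r) / (rX * rX)) M"

definition fuchsian_at_infinity :: "'a::field ratfun mat \<Rightarrow> bool" where
  "fuchsian_at_infinity M \<longleftrightarrow> fuchsian_at 0 (at_infinity_transform M)"

definition residue_at_infinity :: "'a::field ratfun mat \<Rightarrow> 'a mat" where
  "residue_at_infinity M = residue_at 0 (at_infinity_transform M)"

definition is_normalization :: "'a::field_char_0 set \<Rightarrow> bool" where
  "is_normalization N \<longleftrightarrow> (\<forall>l. \<exists>!m. m \<in> N \<and> (\<exists>k::int. m = l + of_int k))"

definition normalized_at :: "'a::field_char_0 set \<Rightarrow> 'a \<Rightarrow> 'a ratfun mat \<Rightarrow> bool" where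
  "normalized_at N x0 M \<longleftrightarrow> fuchsian_at x0 M \<and>
     (\<forall>e. eigenvalue (residue_at x0 M) e \<longrightarrow> e \<in> N)"

definition normalized_at_infinity :: "'a::field_char_0 set \<Rightarrow> 'a ratfun mat \<Rightarrow> bool" where
  "normalized_at_infinity N M \<longleftrightarrow> fuchsian_at_infinity M \<and>
     (\<forall>e. eigenvalue (residue_at_infinity M) e \<longrightarrow> e \<in> N)"

text \<open>Gauge transformation M_T = T^{-1} (M T - dT/dx), with Tinv the inverse of T.\<close>
definition gauge :: "'a::field ratfun mat \<Rightarrow> 'a ratfun mat \<Rightarrow> 'a ratfun mat \<Rightarrow> 'a ratfun mat" where
  "gauge M T Tinv = Tinv * (M * T - mat_deriv T)"

definition is_polynomial :: "'a::field ratfun \<Rightarrow> bool" where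
  "is_polynomial r \<longleftrightarrow> (\<exists>p. r = to_fract p)"

end

theory Submission
  imports Defs
begin


lemma pCons0_mult: "[:0,1:] * (p::'a::comm_ring_1 poly) = pCons 0 p"
  by simp

lemma alg_dvd_cancel:
  fixes f g h :: "'a::alg_closed_field poly"
  assumes "f dvd g * h" and "\<And>x. poly f x = 0 \<Longrightarrow> poly g x \<noteq> 0"
  shows "f dvd h"
  using assms
proof (induction "degree f" arbitrary: f h rule: less_induct)
  case less
  show ?case
  proof (cases "f = 0")
    case True
    hence "g \<noteq> 0" using less(3)[of 0] by auto
    moreover have "g * h = 0" using less(2) True by simp
    ultimately show ?thesis using True by simp
  next
    case f0: False
    show ?thesis
    proof (cases "degree f = 0")
      case True
      then obtain c where "f = [:c:]" using degree_eq_zeroE by blast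
      with f0 have "is_unit f" by (simp add: is_unit_iff_degree True)
      thus ?thesis by (simp add: unit_imp_dvd)
    next
      case False
      then obtain r where r: "poly f r = 0" using alg_closed_imp_poly_has_root by blast
      then obtain f1 where f1: "f = [:-r,1:] * f1" using poly_eq_0_iff_dvd by (metis dvdE)
      have "poly g r \<noteq> 0" using less(3) r by blast
      moreover have "poly (g * h) r = 0" using less(2) r by (metis dvdE mult_eq_0_iff poly_mult)
      ultimately have "poly h r = 0" by simp
      then obtain h1 where h1: "h = [:-r,1:] * h1" using poly_eq_0_iff_dvd by (metis dvdE)
      have nz: "[:-r,1:] \<noteq> (0::'a poly)" by simp
      have e: "g * ([:-r,1:]*h1) = [:-r,1:]*(g*h1)" by (rule mult.left_commute)
      have "[:-r,1:] * f1 dvd [:-r,1:] * (g * h1)" using less(2) unfolding f1 h1 e .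
      hence d1: "f1 dvd g * h1" using nz dvd_mult_cancel_left by blast
      have f10: "f1 \<noteq> 0" using f0 f1 by auto
      have "degree ([:-r,1:]*f1) = degree [:-r,1:] + degree f1" by (rule degree_mult_eq[OF nz f10])
      hence "degree f = Suc (degree f1)" using f1 by simp
      hence lt: "degree f1 < degree f" by simp
      have "\<And>x. poly f1 x = 0 \<Longrightarrow> poly g x \<noteq> 0" using less(3) f1 by simp
      hence "f1 dvd h1" using less(1)[OF lt d1] by blast
      thus ?thesis unfolding f1 h1 by (intro mult_dvd_mono dvd_refl)
    qed
  qed
qed

lemma sylvester_zero:
  fixes P Q X :: "'a::alg_closed_field mat"
  assumes P: "P \<in> carrier_mat n n" and Q: "Q \<in> carrier_mat n n" and X: "X \<in> carrier_mat n n"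
    and eq: "P * X = X * Q"
    and noev: "\<And>e. eigenvalue P e \<Longrightarrow> eigenvalue Q e \<Longrightarrow> False"
  shows "X = 0\<^sub>m n n"
proof -
  let ?h = "\<lambda>a::'a. [:a:]"
  define CP where "CP = char_poly_matrix P"
  define CQ where "CQ = char_poly_matrix Q"
  define Xh where "Xh = map_mat ?h X"
  define cP where "cP = char_poly P"
  define cQ where "cQ = char_poly Q"
  have CP: "CP \<in> carrier_mat n n" and CQ: "CQ \<in> carrier_mat n n" and Xh: "Xh \<in> carrier_mat n n"
    using P Q X by (auto simp: CP_def CQ_def Xh_def)
  have dCP: "det CP = cP" unfolding CP_def cP_def char_poly_def ..
  have dCQ: "det CQ = cQ" unfolding CQ_def cQ_def char_poly_def ..
  have aP: "adj_mat CP \<in> carrier_mat n n" "adj_mat CP * CP = cP \<cdot>\<^sub>m 1\<^sub>m n"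
    using adj_mat[OF CP] unfolding dCP by auto
  have aQ: "adj_mat CQ \<in> carrier_mat n n" "CQ * adj_mat CQ = cQ \<cdot>\<^sub>m 1\<^sub>m n"
      "adj_mat CQ * CQ = cQ \<cdot>\<^sub>m 1\<^sub>m n"
    using adj_mat[OF CQ] unfolding dCQ by auto
  have hP: "map_mat ?h (-P) * Xh = map_mat ?h (-P * X)"
    using map_poly_mult[of "-P" n n X n] P X by (simp add: Xh_def)
  have hQ: "Xh * map_mat ?h (-Q) = map_mat ?h (X * - Q)"
    using map_poly_mult[of X n n "-Q" n] Q X by (simp add: Xh_def)
  have "-P * X = X * -Q" using P Q X eq by simp
  hence mm: "map_mat ?h (-P) * Xh = Xh * map_mat ?h (-Q)" using hP hQ by simp
  have CPe: "CP = [:0,1:] \<cdot>\<^sub>m 1\<^sub>m n + map_mat ?h (-P)"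
    using P by (auto simp: CP_def char_poly_matrix_def)
  have CQe: "CQ = [:0,1:] \<cdot>\<^sub>m 1\<^sub>m n + map_mat ?h (-Q)"
    using Q by (auto simp: CQ_def char_poly_matrix_def)
  have step1: "CP * Xh = Xh * CQ"
  proof -
    have "CP * Xh = [:0,1:] \<cdot>\<^sub>m 1\<^sub>m n * Xh + map_mat ?h (-P) * Xh"
      unfolding CPe by (rule add_mult_distrib_mat[of _ n n], insert P Xh, auto)
    also have "\<dots> = [:0,1:] \<cdot>\<^sub>m Xh + Xh * map_mat ?h (-Q)" using Xh mm
      by (simp add: mult_smult_assoc_mat[of _ n n _ n])
    also have "\<dots> = Xh * ([:0,1:] \<cdot>\<^sub>m 1\<^sub>m n) + Xh * map_mat ?h (-Q)" using Xh
      by (simp add: mult_smult_distrib[of Xh n n "1\<^sub>m n" n])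
    also have "\<dots> = Xh * CQ"
      unfolding CQe by (rule mult_add_distrib_mat[symmetric, of _ n n], insert Q Xh, auto)
    finally show ?thesis .
  qed
  define Z where "Z = Xh * adj_mat CQ"
  define W where "W = adj_mat CP * Xh"
  have Z: "Z \<in> carrier_mat n n" and W: "W \<in> carrier_mat n n" using aP aQ Xh by (auto simp: Z_def W_def)
  have ZW: "cP \<cdot>\<^sub>m Z = cQ \<cdot>\<^sub>m W"
  proof -
    have "cP \<cdot>\<^sub>m Z = (adj_mat CP * CP) * Xh * adj_mat CQ"
      using aP aQ Xh by (simp add: Z_def mult_smult_assoc_mat[of _ n n _ n])
    also have "\<dots> = adj_mat CP * (CP * Xh) * adj_mat CQ"
      by (simp only: assoc_mult_mat[OF aP(1) CP Xh])
    also have "\<dots> = adj_mat CP * (Xh * CQ) * adj_mat CQ" by (simp add: step1)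
    also have "\<dots> = adj_mat CP * (Xh * (CQ * adj_mat CQ))"
      using aP aQ Xh CQ by (simp add: assoc_mult_mat[of _ n n _ n _ n])
    also have "\<dots> = cQ \<cdot>\<^sub>m W"
      using aP aQ Xh by (simp add: W_def mult_smult_distrib[of _ n n _ n])
    finally show ?thesis .
  qed
  have noroot: "\<And>x. poly cQ x = 0 \<Longrightarrow> poly cP x \<noteq> 0"
    using noev eigenvalue_root_char_poly[OF P] eigenvalue_root_char_poly[OF Q]
    by (auto simp: cP_def cQ_def)
  have dv: "cQ dvd Z $$ (i,j)" if "i < n" "j < n" for i j
  proof -
    have "cP * Z $$ (i,j) = cQ * W $$ (i,j)"
      using arg_cong[OF ZW, of "\<lambda>M. M $$ (i,j)"] that Z W by simp
    hence "cQ dvd cP * Z $$ (i,j)" by simp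
    thus ?thesis using alg_dvd_cancel noroot by blast
  qed
  define Y where "Y = mat n n (\<lambda>(i,j). Z $$ (i,j) div cQ)"
  have Y: "Y \<in> carrier_mat n n" by (simp add: Y_def)
  have ZY: "Z = cQ \<cdot>\<^sub>m Y"
    by (rule eq_matI, insert Z dv, auto simp: Y_def)
  have cQ0: "cQ \<noteq> 0" using degree_monic_char_poly[OF Q] by (auto simp: cQ_def)
  have "cQ \<cdot>\<^sub>m (Y * CQ) = Z * CQ" using Y CQ by (simp add: ZY mult_smult_assoc_mat[of _ n n _ n])
  also have "\<dots> = Xh * (adj_mat CQ * CQ)"
    using aQ Xh CQ by (simp add: Z_def)
  also have "adj_mat CQ * CQ = cQ \<cdot>\<^sub>m 1\<^sub>m n" using aQ by simp
  also have "Xh * (cQ \<cdot>\<^sub>m 1\<^sub>m n) = cQ \<cdot>\<^sub>m Xh" using Xh by (simp add: mult_smult_distrib[of Xh n n "1\<^sub>m n" n])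
  finally have e2: "cQ \<cdot>\<^sub>m (Y * CQ) = cQ \<cdot>\<^sub>m Xh" .
  have YCQ: "Y * CQ = Xh"
  proof (rule eq_matI)
    fix i j assume ij: "i < dim_row Xh" "j < dim_col Xh"
    have "cQ * (Y * CQ) $$ (i,j) = cQ * Xh $$ (i,j)"
      using arg_cong[OF e2, of "\<lambda>M. M $$ (i,j)"] ij Y CQ Xh by simp
    thus "(Y * CQ) $$ (i,j) = Xh $$ (i,j)" using cQ0 by simp
  qed (insert Y CQ Xh, auto)
  have YCQ2: "Y * CQ = [:0,1:] \<cdot>\<^sub>m Y + Y * map_mat ?h (-Q)"
  proof -
    have "Y * CQ = Y * ([:0,1:] \<cdot>\<^sub>m 1\<^sub>m n) + Y * map_mat ?h (-Q)"
      unfolding CQe by (rule mult_add_distrib_mat[of _ n n], insert Q Y, auto)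
    thus ?thesis using Y by (simp add: mult_smult_distrib[of Y n n "1\<^sub>m n" n])
  qed
  have rec: "coeff (Y $$ (i,j)) m = (\<Sum>l<n. Q $$ (l,j) * coeff (Y $$ (i,l)) (Suc m))"
    if "i < n" "j < n" for i j m
  proof -
    have "Xh $$ (i,j) = [:0,1:] * Y $$ (i,j) + (\<Sum>l<n. Y $$ (i,l) * [:- Q $$ (l,j):])"
      using arg_cong[OF YCQ2, of "\<lambda>M. M $$ (i,j)"] that Y Q YCQ
      by (simp add: scalar_prod_def atLeast0LessThan)
    hence "coeff (Xh $$ (i,j)) (Suc m) = coeff ([:0,1:] * Y $$ (i,j)) (Suc m)
       + (\<Sum>l<n. coeff (Y $$ (i,l) * [:- Q $$ (l,j):]) (Suc m))"
      by (simp add: coeff_sum)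
    moreover have "coeff (Xh $$ (i,j)) (Suc m) = 0" using that X by (simp add: Xh_def)
    moreover have "coeff ([:0,1:] * Y $$ (i,j)) (Suc m) = coeff (Y $$ (i,j)) m"
      by (simp add: pCons0_mult)
    moreover have "coeff (Y $$ (i,l) * [:- Q $$ (l,j):]) (Suc m) = - Q $$ (l,j) * coeff (Y $$ (i,l)) (Suc m)" for l
      by (simp add: mult.commute)
    ultimately show ?thesis by (simp add: sum_negf)
  qed
  obtain D where D: "\<And>i l m. i < n \<Longrightarrow> l < n \<Longrightarrow> m \<ge> D \<Longrightarrow> coeff (Y $$ (i,l)) m = 0"
  proof -
    define D where "D = Suc (Max ({0} \<union> {degree (Y $$ (i,l)) | i l. i < n \<and> l < n}))"
    have fin: "finite {degree (Y $$ (i,l)) | i l. i < n \<and> l < n}"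
    proof -
      have "{degree (Y $$ (i,l)) | i l. i < n \<and> l < n} = (\<lambda>(i,l). degree (Y $$ (i,l))) ` ({..<n} \<times> {..<n})"
        by auto
      thus ?thesis by simp
    qed
    have "coeff (Y $$ (i,l)) m = 0" if "i < n" "l < n" "m \<ge> D" for i l m
    proof -
      have "degree (Y $$ (i,l)) \<le> Max ({0} \<union> {degree (Y $$ (i,l)) | i l. i < n \<and> l < n})"
        by (rule Max_ge, insert fin that, auto)
      thus ?thesis using that by (intro coeff_eq_0, simp add: D_def)
    qed
    thus ?thesis using that by blast
  qed
  have allz: "\<forall>i<n. \<forall>l<n. \<forall>m\<ge>D - k. coeff (Y $$ (i,l)) m = 0" for k
  proof (induction k)
    case 0 thus ?case using D by simp
  next
    case (Suc k)
    show ?case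
    proof (intro allI impI)
      fix i l m assume il: "i < n" "l < n" "D - Suc k \<le> m"
      show "coeff (Y $$ (i,l)) m = 0"
      proof (cases "m \<ge> D - k")
        case True thus ?thesis using Suc il by blast
      next
        case False
        hence "Suc m \<ge> D - k" using il by linarith
        hence "\<forall>l'<n. coeff (Y $$ (i,l')) (Suc m) = 0" using Suc il by blast
        thus ?thesis using rec[OF il(1,2), of m] by simp
      qed
    qed
  qed
  have "Y = 0\<^sub>m n n"
  proof (rule eq_matI)
    fix i j assume "i < dim_row (0\<^sub>m n n :: 'a poly mat)" "j < dim_col (0\<^sub>m n n :: 'a poly mat)"
    hence "i < n" "j < n" by auto
    thus "Y $$ (i,j) = 0\<^sub>m n n $$ (i,j)" using allz[of D] by (auto intro: poly_eqI)
  qed (insert Y, auto)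
  hence "Xh = 0\<^sub>m n n" using YCQ CQ by simp
  show "X = 0\<^sub>m n n"
  proof (rule eq_matI)
    fix i j assume "i < dim_row (0\<^sub>m n n :: 'a mat)" "j < dim_col (0\<^sub>m n n :: 'a mat)"
    hence ij: "i < n" "j < n" by auto
    have "Xh $$ (i,j) = 0" using \<open>Xh = 0\<^sub>m n n\<close> ij by simp
    thus "X $$ (i,j) = 0\<^sub>m n n $$ (i,j)" using ij X by (simp add: Xh_def)
  qed (insert X, auto)
qed



abbreviation tf :: "'a::field poly \<Rightarrow> 'a ratfun" where "tf \<equiv> to_fract"

lemma tf_of_nat[simp]: "tf (of_nat k) = of_nat k" by (induction k) simp_all
lemma tf_power[simp]: "tf (p ^ k) = tf p ^ k" by (induction k) simp_all

lemma tf_eq_div: "y \<noteq> 0 \<Longrightarrow> v \<noteq> 0 \<Longrightarrow> tf x / tf y = tf u / tf v \<longleftrightarrow> x * v = u * y"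
proof -
  assume "y \<noteq> 0" "v \<noteq> 0"
  hence "tf x / tf y = tf u / tf v \<longleftrightarrow> tf x * tf v = tf u * tf y"
    by (simp add: divide_simps)
  also have "\<dots> \<longleftrightarrow> x * v = u * y" by (metis to_fract_eq_iff to_fract_mult)
  finally show ?thesis .
qed

lemma rrep: "rden r \<noteq> 0 \<and> r = Fract (rnum r) (rden r)"
proof -
  obtain a b where "r = Fract a b" "b \<noteq> 0" by (cases r)
  hence "\<exists>pq. snd pq \<noteq> 0 \<and> r = Fract (fst pq) (snd pq)" by (intro exI[of _ "(a,b)"]) simp
  from someI_ex[OF this] show ?thesis by (simp add: rnum_def rden_def rrep_def)
qed

lemma rrep_div: "rden r \<noteq> 0" "r = tf (rnum r) / tf (rden r)"
  using rrep[of r] by (auto simp: Fract_conv_to_fract)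

lemma ratfun_cases: obtains p q where "q \<noteq> 0" "r = tf p / tf q"
  using rrep_div by blast

lemma pderiv_identity:
  fixes a b p q :: "'a::field poly"
  assumes H: "a * q = p * b"
  shows "(pderiv a * b - a * pderiv b) * (q * q) = (pderiv p * q - p * pderiv q) * (b * b)"
proof -
  have H': "pderiv a * q + a * pderiv q = pderiv p * b + p * pderiv b"
    using arg_cong[OF H, of pderiv] by (simp add: pderiv_mult algebra_simps)
  have "(pderiv a * b - a * pderiv b) * (q * q)
     = b * q * (pderiv a * q + a * pderiv q) - (a * q) * (b * pderiv q) - (a * q) * pderiv b * q"
    by (simp add: algebra_simps)
  also have "\<dots> = b * q * (pderiv p * b + p * pderiv b) - (p * b) * (b * pderiv q) - (p * b) * pderiv b * q"
    by (simp only: H H')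
  also have "\<dots> = (pderiv p * q - p * pderiv q) * (b * b)" by (simp add: algebra_simps)
  finally show ?thesis .
qed

lemma rderiv_div: assumes q: "q \<noteq> 0"
  shows "rderiv (tf p / tf q) = tf (pderiv p * q - p * pderiv q) / tf (q * q)"
proof -
  define r where "r = tf p / tf q"
  have b: "rden r \<noteq> 0" and rr: "r = tf (rnum r) / tf (rden r)" using rrep_div by auto
  have H: "rnum r * q = p * rden r" using rr b q tf_eq_div unfolding r_def by metis
  have "rderiv r = tf (pderiv (rnum r) * rden r - rnum r * pderiv (rden r)) / tf (rden r * rden r)"
    unfolding rderiv_def by (simp add: Fract_conv_to_fract)
  also have "\<dots> = tf (pderiv p * q - p * pderiv q) / tf (q * q)"
    using pderiv_identity[OF H] b q by (subst tf_eq_div) auto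
  finally show ?thesis unfolding r_def .
qed

lemma rderiv_tf[simp]: "rderiv (tf p) = tf (pderiv p)"
  using rderiv_div[of 1 p] by simp

lemma rderiv_add[simp]: "rderiv (u + v) = rderiv u + rderiv v"
proof -
  obtain a b where ab: "b \<noteq> 0" "u = tf a / tf b" by (rule ratfun_cases)
  obtain c d where cd: "d \<noteq> 0" "v = tf c / tf d" by (rule ratfun_cases)
  have du: "rderiv u = tf (pderiv a * b - a * pderiv b) / tf (b * b)"
    unfolding ab(2) by (rule rderiv_div[OF ab(1)])
  have dv: "rderiv v = tf (pderiv c * d - c * pderiv d) / tf (d * d)"
    unfolding cd(2) by (rule rderiv_div[OF cd(1)])
  have uv: "u + v = tf (a * d + c * b) / tf (b * d)" using ab cd by (simp add: field_simps)
  have "rderiv (u + v) = tf (pderiv (a * d + c * b) * (b * d) - (a * d + c * b) * pderiv (b * d)) / tf (b * d * (b * d))"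
    unfolding uv by (rule rderiv_div) (use ab cd in simp)
  also have "\<dots> = rderiv u + rderiv v"
    unfolding du dv unfolding ab(2) cd(2) using ab(1) cd(1) by (simp add: field_simps pderiv_add pderiv_mult)
  finally show ?thesis .
qed

lemma rderiv_mult[simp]: "rderiv (u * v) = rderiv u * v + u * rderiv v"
proof -
  obtain a b where ab: "b \<noteq> 0" "u = tf a / tf b" by (rule ratfun_cases)
  obtain c d where cd: "d \<noteq> 0" "v = tf c / tf d" by (rule ratfun_cases)
  have du: "rderiv u = tf (pderiv a * b - a * pderiv b) / tf (b * b)"
    unfolding ab(2) by (rule rderiv_div[OF ab(1)])
  have dv: "rderiv v = tf (pderiv c * d - c * pderiv d) / tf (d * d)"
    unfolding cd(2) by (rule rderiv_div[OF cd(1)])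
  have uv: "u * v = tf (a * c) / tf (b * d)" using ab cd by (simp add: field_simps)
  have "rderiv (u * v) = tf (pderiv (a * c) * (b * d) - (a * c) * pderiv (b * d)) / tf (b * d * (b * d))"
    unfolding uv by (rule rderiv_div) (use ab cd in simp)
  also have "\<dots> = rderiv u * v + u * rderiv v"
    unfolding du dv unfolding ab(2) cd(2) using ab(1) cd(1) by (simp add: field_simps pderiv_add pderiv_mult)
  finally show ?thesis .
qed

lemma rderiv_zero[simp]: "rderiv 0 = 0"
  using rderiv_tf[of 0] by simp

lemma rderiv_one[simp]: "rderiv 1 = 0"
  using rderiv_tf[of 1] by simp

lemma rderiv_minus[simp]: "rderiv (- u) = - rderiv u"
proof -
  have "rderiv (u + - u) = 0" by simp
  hence "rderiv u + rderiv (-u) = 0" by (simp only: rderiv_add)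
  thus ?thesis by (simp add: eq_neg_iff_add_eq_0 add.commute)
qed

lemma rderiv_diff[simp]: "rderiv (u - v) = rderiv u - rderiv v"
  using rderiv_add[of u "-v"] by simp

lemma rderiv_sum: "rderiv (sum f A) = sum (\<lambda>x. rderiv (f x)) A"
  by (induction A rule: infinite_finite_induct) auto

lemma rderiv_rconst[simp]: "rderiv (rconst c) = 0"
  unfolding rconst_def by simp

lemma rderiv_rX[simp]: "rderiv rX = 1"
  unfolding rX_def by (simp add: pderiv_pCons pCons_one)

lemma rderiv_of_nat[simp]: "rderiv (of_nat k :: 'a::field ratfun) = 0"
  by (induction k) auto

lemma rderiv_power: "rderiv (u ^ Suc k) = of_nat (Suc k) * u ^ k * rderiv u"
  by (induction k) (auto simp: algebra_simps)

definition tX :: "'a::field \<Rightarrow> 'a ratfun" where "tX x0 = rX - rconst x0"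

lemma tX_tf: "tX x0 = tf [:-x0, 1:]"
  unfolding tX_def rX_def rconst_def by (simp flip: to_fract_diff)

lemma tX_nz[simp]: "tX x0 \<noteq> 0" unfolding tX_tf by simp

lemma rderiv_tX[simp]: "rderiv (tX x0) = 1" unfolding tX_def by simp

lemma rderiv_tX_power: "rderiv (tX x0 ^ Suc k) = of_nat (Suc k) * tX x0 ^ k"
  using rderiv_power[of "tX x0" k] by simp

lemma tX_rderiv_power: "tX x0 * rderiv (tX x0 ^ m) = of_nat m * tX x0 ^ m"
proof (cases m)
  case 0 then show ?thesis by simp
next
  case (Suc m')
  have h: "rderiv (tX x0 ^ m) = of_nat m * tX x0 ^ m'" unfolding Suc by (rule rderiv_tX_power)
  show ?thesis unfolding h using Suc by (simp add: algebra_simps)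
qed

subsection \<open>Regularity and evaluation\<close>

lemma regular_iff: "regular_at x0 r \<longleftrightarrow> (\<exists>p q. poly q x0 \<noteq> 0 \<and> r = tf p / tf q)"
  unfolding regular_at_def by (simp add: Fract_conv_to_fract)

lemma eval_at_div: assumes q: "poly q x0 \<noteq> 0"
  shows "eval_at x0 (tf p / tf q) = poly p x0 / poly q x0"
proof -
  have ex: "\<exists>p' q'. poly q' x0 \<noteq> 0 \<and> tf p / tf q = Fract p' q' \<and> poly p x0 / poly q x0 = poly p' x0 / poly q' x0"
    using q by (intro exI[of _ p] exI[of _ q]) (simp add: Fract_conv_to_fract)
  have uniq: "v = poly p x0 / poly q x0"
    if "\<exists>p' q'. poly q' x0 \<noteq> 0 \<and> tf p / tf q = Fract p' q' \<and> v = poly p' x0 / poly q' x0" for v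
  proof -
    from that obtain p' q' where h: "poly q' x0 \<noteq> 0" "tf p / tf q = tf p' / tf q'" "v = poly p' x0 / poly q' x0"
      by (auto simp: Fract_conv_to_fract)
    have "q \<noteq> 0" "q' \<noteq> 0" using q h(1) by auto
    hence "p * q' = p' * q" using h(2) tf_eq_div by metis
    hence "poly p x0 * poly q' x0 = poly p' x0 * poly q x0" by (metis poly_mult)
    thus ?thesis using h(1,3) q by (simp add: frac_eq_eq)
  qed
  show ?thesis unfolding eval_at_def
    by (rule some_equality) (fact ex, rule uniq)
qed

lemma regularE: assumes "regular_at x0 r"
  obtains p q where "poly q x0 \<noteq> 0" "r = tf p / tf q"
  using assms regular_iff by blast

lemma regular_evalI: "poly q x0 \<noteq> 0 \<Longrightarrow> r = tf p / tf q \<Longrightarrow> regular_at x0 r \<and> eval_at x0 r = poly p x0 / poly q x0"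
  using regular_iff eval_at_div by blast

lemma regular_tf[simp]: "regular_at x0 (tf p)" and eval_tf[simp]: "eval_at x0 (tf p) = poly p x0"
  using regular_evalI[of 1 x0 "tf p" p] by auto

lemma regular_add: assumes "regular_at x0 u" "regular_at x0 v"
  shows "regular_at x0 (u + v) \<and> eval_at x0 (u + v) = eval_at x0 u + eval_at x0 v"
proof -
  obtain a b where ab: "poly b x0 \<noteq> 0" "u = tf a / tf b" using assms(1) by (rule regularE)
  obtain c d where cd: "poly d x0 \<noteq> 0" "v = tf c / tf d" using assms(2) by (rule regularE)
  have b: "b \<noteq> 0" "d \<noteq> 0" using ab cd by auto
  have uv: "u + v = tf (a * d + c * b) / tf (b * d)" using ab cd b by (simp add: field_simps)
  have bd: "poly (b * d) x0 \<noteq> 0" using ab cd by simp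
  have 1: "regular_at x0 (u + v) \<and> eval_at x0 (u + v) = poly (a * d + c * b) x0 / poly (b * d) x0"
    by (rule regular_evalI[OF bd uv])
  have 2: "eval_at x0 u = poly a x0 / poly b x0" using regular_evalI[OF ab(1) ab(2)] by blast
  have 3: "eval_at x0 v = poly c x0 / poly d x0" using regular_evalI[OF cd(1) cd(2)] by blast
  show ?thesis using 1 ab(1) cd(1) unfolding 2 3 by (simp add: field_simps)
qed

lemma regular_mult: assumes "regular_at x0 u" "regular_at x0 v"
  shows "regular_at x0 (u * v) \<and> eval_at x0 (u * v) = eval_at x0 u * eval_at x0 v"
proof -
  obtain a b where ab: "poly b x0 \<noteq> 0" "u = tf a / tf b" using assms(1) by (rule regularE)
  obtain c d where cd: "poly d x0 \<noteq> 0" "v = tf c / tf d" using assms(2) by (rule regularE)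
  have b: "b \<noteq> 0" "d \<noteq> 0" using ab cd by auto
  have uv: "u * v = tf (a * c) / tf (b * d)" using ab cd b by (simp add: field_simps)
  have bd: "poly (b * d) x0 \<noteq> 0" using ab cd by simp
  have 1: "regular_at x0 (u * v) \<and> eval_at x0 (u * v) = poly (a * c) x0 / poly (b * d) x0"
    by (rule regular_evalI[OF bd uv])
  have 2: "eval_at x0 u = poly a x0 / poly b x0" using regular_evalI[OF ab(1) ab(2)] by blast
  have 3: "eval_at x0 v = poly c x0 / poly d x0" using regular_evalI[OF cd(1) cd(2)] by blast
  show ?thesis using 1 ab(1) cd(1) unfolding 2 3 by (simp add: field_simps)
qed

lemma regular_uminus: assumes "regular_at x0 u"
  shows "regular_at x0 (- u) \<and> eval_at x0 (- u) = - eval_at x0 u"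
proof -
  have e: "eval_at x0 (-1) = -1" using eval_tf[of x0 "-1"] by simp
  show ?thesis using regular_mult[OF regular_tf[of x0 "-1"] assms] e by simp
qed

lemma regular_diff: assumes "regular_at x0 u" "regular_at x0 v"
  shows "regular_at x0 (u - v) \<and> eval_at x0 (u - v) = eval_at x0 u - eval_at x0 v"
  using regular_add[OF assms(1) conjunct1[OF regular_uminus[OF assms(2)]]] regular_uminus[OF assms(2)]
  by simp

lemma regular_sum: assumes "\<And>x. x \<in> A \<Longrightarrow> regular_at x0 (f x)"
  shows "regular_at x0 (sum f A) \<and> eval_at x0 (sum f A) = (\<Sum>x\<in>A. eval_at x0 (f x))"
  using assms
proof (induction A rule: infinite_finite_induct)
  case (insert x F)
  thus ?case using regular_add[of x0 "f x" "sum f F"] by auto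
qed (auto simp: regular_tf[of x0 0, simplified] eval_tf[of x0 0, simplified])

lemma regular_of_nat: "regular_at x0 (of_nat k) \<and> eval_at x0 (of_nat k) = of_nat k"
  using regular_tf[of x0 "of_nat k"] eval_tf[of x0 "of_nat k"] by simp

lemma regular_tX: "regular_at x0 (tX x0) \<and> eval_at x0 (tX x0) = 0"
  unfolding tX_tf by simp

lemma regular_deriv: assumes "regular_at x0 u" shows "regular_at x0 (rderiv u)"
proof -
  obtain a b where ab: "poly b x0 \<noteq> 0" "u = tf a / tf b" using assms by (rule regularE)
  have b0: "b \<noteq> 0" using ab(1) by auto
  have "rderiv u = tf (pderiv a * b - a * pderiv b) / tf (b * b)"
    unfolding ab(2) by (rule rderiv_div[OF b0])
  moreover have "poly (b * b) x0 \<noteq> 0" using ab(1) by simp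
  ultimately show ?thesis using regular_evalI by blast
qed

lemma regular_zero_factor: assumes "regular_at x0 r" "eval_at x0 r = 0"
  obtains s where "regular_at x0 s" "r = tX x0 * s"
proof -
  obtain a b where ab: "poly b x0 \<noteq> 0" "r = tf a / tf b" using assms(1) by (rule regularE)
  have "poly a x0 / poly b x0 = 0" using assms(2) ab eval_at_div by metis
  hence "poly a x0 = 0" using ab by simp
  then obtain a1 where a1: "a = [:-x0, 1:] * a1" using poly_eq_0_iff_dvd by (metis dvdE)
  have "r = tX x0 * (tf a1 / tf b)" unfolding ab(2) a1 tX_tf to_fract_mult
    by (rule times_divide_eq_right[symmetric])
  moreover have "regular_at x0 (tf a1 / tf b)" using ab regular_iff by blast
  ultimately show ?thesis using that by blast
qed

lemma pole_clear: "\<exists>m. regular_at x0 (tX x0 ^ m * r)"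
proof -
  obtain a b where ab: "b \<noteq> 0" "r = tf a / tf b" by (rule ratfun_cases)
  define m where "m = order x0 b"
  obtain b1 where b1: "b = [:- x0, 1:] ^ m * b1" "\<not> [:- x0, 1:] dvd b1"
    using order_decomp[OF ab(1), of x0] unfolding m_def[symmetric] by blast
  have tb: "tf b = tX x0 ^ m * tf b1" unfolding b1(1) tX_tf by simp
  have b10: "b1 \<noteq> 0" using ab(1) b1(1) by auto
  have "poly b1 x0 \<noteq> 0" using b1(2) poly_eq_0_iff_dvd by blast
  moreover have "tX x0 ^ m * r = tf a / tf b1"
    unfolding ab(2) tb using b10 by (simp add: field_simps)
  ultimately show ?thesis using regular_iff by blast
qed

lemma regular_mono: assumes "regular_at x0 (tX x0 ^ m * r)" "m \<le> m'"
  shows "regular_at x0 (tX x0 ^ m' * r)"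
proof -
  have "tX x0 ^ m' * r = tX x0 ^ (m' - m) * (tX x0 ^ m * r)"
    using assms(2) by (simp add: power_add[symmetric] mult.assoc)
  moreover have "regular_at x0 (tX x0 ^ (m' - m))"
    unfolding tX_tf by (simp flip: tf_power)
  ultimately show ?thesis using regular_mult[OF _ assms(1)] by metis
qed

lemma regular_everywhere_poly:
  fixes r :: "'a::alg_closed_field ratfun"
  assumes "\<And>x0. regular_at x0 r"
  shows "is_polynomial r"
proof -
  obtain a b where ab: "b \<noteq> 0" "r = tf a / tf b" by (rule ratfun_cases)
  have "\<forall>a b. b \<noteq> 0 \<longrightarrow> r = tf a / tf b \<longrightarrow> degree b = d \<longrightarrow> is_polynomial r" for d
  proof (induction d rule: less_induct)
    case (less d)
    show ?case
    proof (intro allI impI)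
      fix a b :: "'a poly" assume h: "b \<noteq> 0" "r = tf a / tf b" "degree b = d"
      show "is_polynomial r"
      proof (cases "d = 0")
        case True
        then obtain c where c: "b = [:c:]" using h(3) degree_eq_zeroE by blast
        with h have "c \<noteq> 0" by auto
        have e: "[:c:] * Polynomial.smult (inverse c) a = a" using \<open>c \<noteq> 0\<close> by simp
        have "r = tf ([:c:] * Polynomial.smult (inverse c) a) / tf [:c:]" using h(2) c e by simp
        also have "\<dots> = tf (Polynomial.smult (inverse c) a)" using \<open>c \<noteq> 0\<close>
          by (simp only: to_fract_mult) simp
        finally have "r = tf (Polynomial.smult (inverse c) a)" .
        thus ?thesis unfolding is_polynomial_def by blast
      next
        case False
        then obtain x0 where x0: "poly b x0 = 0" using h(3) alg_closed_imp_poly_has_root by blast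
        obtain p q where pq: "poly q x0 \<noteq> 0" "r = tf p / tf q" using assms[of x0] by (rule regularE)
        have "q \<noteq> 0" using pq by auto
        hence "a * q = p * b" using h pq tf_eq_div by metis
        hence "poly a x0 * poly q x0 = 0" using x0 by (metis poly_mult mult_zero_right)
        hence "poly a x0 = 0" using pq by simp
        then obtain a1 where a1: "a = [:-x0,1:] * a1" using poly_eq_0_iff_dvd by (metis dvdE)
        obtain b1 where b1: "b = [:-x0,1:] * b1" using x0 poly_eq_0_iff_dvd by (metis dvdE)
        have b10: "b1 \<noteq> 0" using b1 h by auto
        have "degree b = Suc (degree b1)" using b1 b10 degree_mult_eq[of "[:-x0,1:]" b1] by simp
        hence lt: "degree b1 < d" using h by simp
        have "r = tf a1 / tf b1" unfolding h(2) a1 b1 to_fract_mult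
          by (rule mult_divide_mult_cancel_left) simp
        thus ?thesis using less[OF lt] b10 by blast
      qed
    qed
  qed
  thus ?thesis using ab by blast
qed



lemma mult_entry: assumes "A \<in> carrier_mat nr n" "B \<in> carrier_mat n nc" "i < nr" "j < nc"
  shows "(A * B) $$ (i,j) = (\<Sum>l<n. A $$ (i,l) * B $$ (l,j))"
  using assms by (auto simp: scalar_prod_def atLeast0LessThan intro!: sum.cong)

lemma eigenvalue_shift:
  fixes A :: "'a::field mat"
  assumes A: "A \<in> carrier_mat n n" and ev: "eigenvalue (A + c \<cdot>\<^sub>m 1\<^sub>m n) e"
  shows "eigenvalue A (e - c)"
proof -
  have P: "A + c \<cdot>\<^sub>m 1\<^sub>m n \<in> carrier_mat n n" using A by simp
  have "char_matrix (A + c \<cdot>\<^sub>m 1\<^sub>m n) e = char_matrix A (e - c)"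
    unfolding char_matrix_def by (rule eq_matI, insert A, auto)
  thus ?thesis using ev eigenvalue_det[OF P] eigenvalue_det[OF A] by simp
qed

lemma normalization_unique:
  fixes N :: "'a::field_char_0 set"
  assumes N: "is_normalization N" and e1: "e \<in> N" and e2: "e - of_nat k \<in> N"
  shows "k = 0"
proof -
  obtain m where m: "m \<in> N \<and> (\<exists>z::int. m = (e - of_nat k) + of_int z)"
    and u: "\<And>m'. m' \<in> N \<and> (\<exists>z::int. m' = (e - of_nat k) + of_int z) \<Longrightarrow> m' = m"
    using N unfolding is_normalization_def by metis
  have "e = m" by (rule u, insert e1, auto intro!: exI[of _ "int k"])
  moreover have "e - of_nat k = m" by (rule u, insert e2, auto intro!: exI[of _ 0])
  ultimately show "k = 0" by simp
qed

lemma eval_sum_mult: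
  assumes "\<And>l. l < n \<Longrightarrow> regular_at x0 (f l)" "\<And>l. l < n \<Longrightarrow> regular_at x0 (g l)"
  shows "regular_at x0 (\<Sum>l<n. f l * g l) \<and> eval_at x0 (\<Sum>l<n. f l * g l) = (\<Sum>l<n. eval_at x0 (f l) * eval_at x0 (g l))"
proof -
  have r: "regular_at x0 (f l * g l) \<and> eval_at x0 (f l * g l) = eval_at x0 (f l) * eval_at x0 (g l)" if "l < n" for l
    using regular_mult[OF assms(1)[OF that] assms(2)[OF that]] .
  show ?thesis using regular_sum[of "{..<n}" x0 "\<lambda>l. f l * g l"] r by auto
qed

lemma core:
  fixes M1 M2 T :: "'a::{alg_closed_field, field_char_0} ratfun mat"
  assumes dims: "M1 \<in> carrier_mat n n" "M2 \<in> carrier_mat n n" "T \<in> carrier_mat n n"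
    and F1: "fuchsian_at x0 M1" and F2: "fuchsian_at x0 M2"
    and eq: "T * M2 = M1 * T - mat_deriv T"
    and N: "is_normalization N"
    and E1: "\<And>e. eigenvalue (residue_at x0 M1) e \<Longrightarrow> e \<in> N"
    and E2: "\<And>e. eigenvalue (residue_at x0 M2) e \<Longrightarrow> e \<in> N"
  shows "\<forall>i<n. \<forall>j<n. regular_at x0 (T $$ (i,j))"
proof (rule ccontr)
  assume nreg: "\<not> (\<forall>i<n. \<forall>j<n. regular_at x0 (T $$ (i,j)))"
  define t where "t = tX x0"
  have RM1: "regular_at x0 (t * M1 $$ (i,j))" if "i < n" "j < n" for i j
    using F1 that dims unfolding fuchsian_at_def t_def tX_def by auto
  have RM2: "regular_at x0 (t * M2 $$ (i,j))" if "i < n" "j < n" for i j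
    using F2 that dims unfolding fuchsian_at_def t_def tX_def by auto
  define G where "G m \<longleftrightarrow> (\<forall>i<n. \<forall>j<n. regular_at x0 (t ^ m * T $$ (i,j)))" for m
  have exG: "\<exists>m. G m"
  proof -
    have "\<forall>ij. \<exists>m. regular_at x0 (t ^ m * T $$ ij)" unfolding t_def using pole_clear by blast
    then obtain f where f: "\<And>ij. regular_at x0 (t ^ f ij * T $$ ij)" by metis
    define m where "m = (\<Sum>ij\<in>{..<n} \<times> {..<n}. f ij)"
    have "G m" unfolding G_def
    proof (intro allI impI)
      fix i j assume "i < n" "j < n"
      hence "f (i,j) \<le> m" unfolding m_def by (intro member_le_sum) auto
      thus "regular_at x0 (t ^ m * T $$ (i, j))" using regular_mono f unfolding t_def by blast
    qed
    thus ?thesis by blast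
  qed
  define k where "k = (LEAST m. G m)"
  have Gk: "G k" unfolding k_def using exG by (rule LeastI_ex)
  have k0: "k \<noteq> 0"
  proof
    assume "k = 0"
    hence "G 0" using Gk by simp
    thus False using nreg unfolding G_def by simp
  qed
  then obtain k' where kk: "k = Suc k'" by (cases k) auto
  define S where "S i j = t ^ k * T $$ (i,j)" for i j
  have RS: "regular_at x0 (S i j)" if "i < n" "j < n" for i j
    using Gk that unfolding G_def S_def by blast
  define S0 where "S0 = mat n n (\<lambda>(i,j). eval_at x0 (S i j))"
  have S0: "S0 \<in> carrier_mat n n" unfolding S0_def by simp
  define A where "A = residue_at x0 M1"
  define B where "B = residue_at x0 M2"
  have A: "A \<in> carrier_mat n n" and B: "B \<in> carrier_mat n n"
    using dims by (auto simp: A_def B_def residue_at_def)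
  have Aij: "A $$ (i,j) = eval_at x0 (t * M1 $$ (i,j))" if "i < n" "j < n" for i j
    using that dims by (simp add: A_def residue_at_def t_def tX_def)
  have Bij: "B $$ (i,j) = eval_at x0 (t * M2 $$ (i,j))" if "i < n" "j < n" for i j
    using that dims by (simp add: B_def residue_at_def t_def tX_def)
  have S0ij: "S0 $$ (i,j) = eval_at x0 (S i j)" if "i < n" "j < n" for i j
    using that by (simp add: S0_def)
  have S0nz: "S0 \<noteq> 0\<^sub>m n n"
  proof
    assume z: "S0 = 0\<^sub>m n n"
    have "G k'" unfolding G_def
    proof (intro allI impI)
      fix i j assume ij: "i < n" "j < n"
      have "eval_at x0 (S i j) = 0" using z ij S0ij[OF ij] by simp
      then obtain s where s: "regular_at x0 s" "S i j = tX x0 * s"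
        using RS[OF ij] regular_zero_factor by blast
      have "t * (t ^ k' * T $$ (i,j)) = t * s" using s(2) kk unfolding S_def t_def by simp
      hence "t ^ k' * T $$ (i,j) = s" unfolding t_def by simp
      thus "regular_at x0 (t ^ k' * T $$ (i,j))" using s(1) by simp
    qed
    hence "k \<le> k'" unfolding k_def by (rule Least_le)
    thus False using kk by simp
  qed
  define P where "P = A + of_nat k \<cdot>\<^sub>m 1\<^sub>m n"
  have P: "P \<in> carrier_mat n n" using A by (simp add: P_def)
  have key: "(\<Sum>l<n. S i l * (t * M2 $$ (l,j))) = (\<Sum>l<n. (t * M1 $$ (i,l)) * S l j) + of_nat k * S i j - t * rderiv (S i j)"
    if ij: "i < n" "j < n" for i j
  proof -
    have e1: "(\<Sum>l<n. T $$ (i,l) * M2 $$ (l,j)) = (\<Sum>l<n. M1 $$ (i,l) * T $$ (l,j)) - rderiv (T $$ (i,j))"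
    proof -
      have "(T * M2) $$ (i,j) = (M1 * T - mat_deriv T) $$ (i,j)" using eq by simp
      moreover have "(T * M2) $$ (i,j) = (\<Sum>l<n. T $$ (i,l) * M2 $$ (l,j))"
        by (rule mult_entry[OF dims(3) dims(2) ij])
      moreover have "(M1 * T - mat_deriv T) $$ (i,j) = (M1 * T) $$ (i,j) - rderiv (T $$ (i,j))"
        using dims ij by (simp add: mat_deriv_def)
      moreover have "(M1 * T) $$ (i,j) = (\<Sum>l<n. M1 $$ (i,l) * T $$ (l,j))"
        by (rule mult_entry[OF dims(1) dims(3) ij])
      ultimately show ?thesis by simp
    qed
    have "t * rderiv (S i j) = (t * rderiv (t ^ k)) * T $$ (i,j) + t ^ Suc k * rderiv (T $$ (i,j))"
      unfolding S_def rderiv_mult by (simp add: algebra_simps)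
    also have "t * rderiv (t ^ k) = of_nat k * t ^ k" unfolding t_def by (rule tX_rderiv_power)
    finally have d: "t * rderiv (S i j) = of_nat k * S i j + t ^ Suc k * rderiv (T $$ (i,j))"
      unfolding S_def by (simp add: algebra_simps)
    have l: "(\<Sum>l<n. S i l * (t * M2 $$ (l,j))) = t ^ Suc k * (\<Sum>l<n. T $$ (i,l) * M2 $$ (l,j))"
      unfolding S_def by (simp add: sum_distrib_left algebra_simps)
    have r: "(\<Sum>l<n. (t * M1 $$ (i,l)) * S l j) = t ^ Suc k * (\<Sum>l<n. M1 $$ (i,l) * T $$ (l,j))"
      unfolding S_def by (simp add: sum_distrib_left algebra_simps)
    show ?thesis unfolding l r e1 d by (simp add: algebra_simps)
  qed
  have PS: "P * S0 = S0 * B"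
  proof (rule eq_matI)
    fix i j assume "i < dim_row (S0 * B)" "j < dim_col (S0 * B)"
    hence ij: "i < n" "j < n" using S0 B by auto
    have PS0: "P * S0 = A * S0 + of_nat k \<cdot>\<^sub>m S0"
      unfolding P_def using A S0 by (simp add: add_mult_distrib_mat[of _ n n] mult_smult_assoc_mat[of _ n n _ n])
    have lhs: "(P * S0) $$ (i,j) = (\<Sum>l<n. A $$ (i,l) * S0 $$ (l,j)) + of_nat k * S0 $$ (i,j)"
      unfolding PS0 using ij A S0 mult_entry[OF A S0 ij] by simp
    have rhs: "(S0 * B) $$ (i,j) = (\<Sum>l<n. S0 $$ (i,l) * B $$ (l,j))"
      by (rule mult_entry[OF S0 B ij])
    have R1: "regular_at x0 (\<Sum>l<n. S i l * (t * M2 $$ (l,j))) \<and> eval_at x0 (\<Sum>l<n. S i l * (t * M2 $$ (l,j))) = (\<Sum>l<n. S0 $$ (i,l) * B $$ (l,j))"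
      using eval_sum_mult[of n x0 "\<lambda>l. S i l" "\<lambda>l. t * M2 $$ (l,j)"] RS RM2 ij S0ij Bij by auto
    have R2: "regular_at x0 (\<Sum>l<n. (t * M1 $$ (i,l)) * S l j) \<and> eval_at x0 (\<Sum>l<n. (t * M1 $$ (i,l)) * S l j) = (\<Sum>l<n. A $$ (i,l) * S0 $$ (l,j))"
      using eval_sum_mult[of n x0 "\<lambda>l. t * M1 $$ (i,l)" "\<lambda>l. S l j"] RS RM1 ij S0ij Aij by auto
    have R3: "regular_at x0 (of_nat k * S i j) \<and> eval_at x0 (of_nat k * S i j) = of_nat k * S0 $$ (i,j)"
      using regular_mult[OF conjunct1[OF regular_of_nat] RS[OF ij]] regular_of_nat[of x0 k] S0ij[OF ij] by simp
    have R4: "regular_at x0 (t * rderiv (S i j)) \<and> eval_at x0 (t * rderiv (S i j)) = 0"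
      using regular_mult[OF conjunct1[OF regular_tX] regular_deriv[OF RS[OF ij]]] regular_tX[of x0]
      unfolding t_def by simp
    have R5: "regular_at x0 ((\<Sum>l<n. (t * M1 $$ (i,l)) * S l j) + of_nat k * S i j) \<and>
       eval_at x0 ((\<Sum>l<n. (t * M1 $$ (i,l)) * S l j) + of_nat k * S i j) = (\<Sum>l<n. A $$ (i,l) * S0 $$ (l,j)) + of_nat k * S0 $$ (i,j)"
      using regular_add[OF conjunct1[OF R2] conjunct1[OF R3]] R2 R3 by simp
    have "eval_at x0 (\<Sum>l<n. S i l * (t * M2 $$ (l,j))) = (\<Sum>l<n. A $$ (i,l) * S0 $$ (l,j)) + of_nat k * S0 $$ (i,j)"
      unfolding key[OF ij] using regular_diff[OF conjunct1[OF R5] conjunct1[OF R4]] R4 R5 by simp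
    thus "(P * S0) $$ (i,j) = (S0 * B) $$ (i,j)" using R1 lhs rhs by simp
  qed (insert P S0 B, auto)
  have "S0 = 0\<^sub>m n n"
  proof (rule sylvester_zero[OF P B S0 PS])
    fix e assume eP: "eigenvalue P e" and eB: "eigenvalue B e"
    have "eigenvalue A (e - of_nat k)" using eigenvalue_shift[OF A] eP unfolding P_def by blast
    hence "e - of_nat k \<in> N" using E1 unfolding A_def by blast
    moreover have "e \<in> N" using E2 eB unfolding B_def by blast
    ultimately have "k = 0" using normalization_unique[OF N] by blast
    thus False using k0 by simp
  qed
  thus False using S0nz by simp
qed



lemma mat_deriv_carrier[simp]: "A \<in> carrier_mat nr nc \<Longrightarrow> mat_deriv A \<in> carrier_mat nr nc"
  unfolding mat_deriv_def by simp

lemma mat_deriv_dims[simp]: "dim_row (mat_deriv A) = dim_row A" "dim_col (mat_deriv A) = dim_col A"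
  unfolding mat_deriv_def by simp_all

lemma mat_deriv_index[simp]: "i < dim_row A \<Longrightarrow> j < dim_col A \<Longrightarrow> mat_deriv A $$ (i,j) = rderiv (A $$ (i,j))"
  unfolding mat_deriv_def by simp

lemma mat_deriv_mult:
  assumes A: "A \<in> carrier_mat nr n" and B: "B \<in> carrier_mat n nc"
  shows "mat_deriv (A * B) = mat_deriv A * B + A * mat_deriv B"
proof (rule eq_matI)
  fix i j assume "i < dim_row (mat_deriv A * B + A * mat_deriv B)" "j < dim_col (mat_deriv A * B + A * mat_deriv B)"
  hence ij: "i < nr" "j < nc" using A B by auto
  have "mat_deriv (A * B) $$ (i,j) = rderiv (\<Sum>l<n. A $$ (i,l) * B $$ (l,j))"
    using mult_entry[OF A B ij] A B ij by (simp add: mat_deriv_def)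
  also have "\<dots> = (\<Sum>l<n. rderiv (A $$ (i,l)) * B $$ (l,j)) + (\<Sum>l<n. A $$ (i,l) * rderiv (B $$ (l,j)))"
    by (simp add: rderiv_sum sum.distrib)
  also have "(\<Sum>l<n. rderiv (A $$ (i,l)) * B $$ (l,j)) = (mat_deriv A * B) $$ (i,j)"
    using mult_entry[OF mat_deriv_carrier[OF A] B ij] A ij by (auto intro!: sum.cong)
  also have "(\<Sum>l<n. A $$ (i,l) * rderiv (B $$ (l,j))) = (A * mat_deriv B) $$ (i,j)"
    using mult_entry[OF A mat_deriv_carrier[OF B] ij] B ij by (auto intro!: sum.cong)
  finally show "mat_deriv (A * B) $$ (i,j) = (mat_deriv A * B + A * mat_deriv B) $$ (i,j)"
    using ij A B by simp
qed (insert A B, auto simp: mat_deriv_def)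

lemma mat_deriv_one: "mat_deriv (1\<^sub>m n) = 0\<^sub>m n n"
  by (rule eq_matI) (auto simp: mat_deriv_def)

lemma gauge_T:
  assumes "M \<in> carrier_mat n n" "T \<in> carrier_mat n n" "Tinv \<in> carrier_mat n n" "T * Tinv = 1\<^sub>m n"
  shows "T * gauge M T Tinv = M * T - mat_deriv T"
proof -
  have X: "M * T - mat_deriv T \<in> carrier_mat n n" using assms by auto
  have "T * gauge M T Tinv = (T * Tinv) * (M * T - mat_deriv T)"
    unfolding gauge_def by (rule assoc_mult_mat[OF assms(2) assms(3) X, symmetric])
  thus ?thesis using assms X by simp
qed

lemma gauge_Tinv:
  assumes M: "M \<in> carrier_mat n n" and T: "T \<in> carrier_mat n n" and Ti: "Tinv \<in> carrier_mat n n"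
    and i1: "T * Tinv = 1\<^sub>m n" and i2: "Tinv * T = 1\<^sub>m n"
  shows "Tinv * M = gauge M T Tinv * Tinv - mat_deriv Tinv"
proof -
  define D where "D = mat_deriv T"
  define E where "E = mat_deriv Tinv"
  have D: "D \<in> carrier_mat n n" and E: "E \<in> carrier_mat n n" using T Ti by (auto simp: D_def E_def)
  define X where "X = Tinv * D * Tinv"
  have X: "X \<in> carrier_mat n n" using D Ti by (simp add: X_def)
  have "D * Tinv + T * E = 0\<^sub>m n n"
    using mat_deriv_mult[OF T Ti] mat_deriv_one[of n] unfolding i1 D_def E_def by metis
  hence TE: "T * E = - (D * Tinv)"
  proof -
    assume z: "D * Tinv + T * E = 0\<^sub>m n n"
    show ?thesis
    proof (rule eq_matI)
      fix i j assume "i < dim_row (- (D * Tinv))" "j < dim_col (- (D * Tinv))"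
      hence ij: "i < n" "j < n" using D Ti by auto
      have "(D * Tinv + T * E) $$ (i,j) = 0" using z ij by simp
      thus "(T * E) $$ (i,j) = (- (D * Tinv)) $$ (i,j)" using ij D Ti T E
        by (simp add: eq_neg_iff_add_eq_0 add.commute)
    qed (insert D Ti T E, auto)
  qed
  have EX: "E = - X"
  proof -
    have "E = (Tinv * T) * E" using i2 E by simp
    also have "\<dots> = Tinv * (T * E)" using Ti T E by simp
    also have "\<dots> = - (Tinv * (D * Tinv))" unfolding TE using Ti D by simp
    also have "Tinv * (D * Tinv) = X" unfolding X_def using Ti D by simp
    finally show ?thesis .
  qed
  have GX: "gauge M T Tinv * Tinv = Tinv * M - X"
  proof -
    have "gauge M T Tinv * Tinv = (Tinv * (M * T) - Tinv * D) * Tinv"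
      unfolding gauge_def D_def[symmetric] using M T Ti D
      by (subst mult_minus_distrib_mat[of _ n n]) auto
    also have "\<dots> = Tinv * (M * T) * Tinv - Tinv * D * Tinv"
      using M T Ti D by (subst minus_mult_distrib_mat[of _ n n]) auto
    also have "Tinv * (M * T) * Tinv = Tinv * M * (T * Tinv)" using M T Ti by (simp add: assoc_mult_mat[of _ n n _ n _ n])
    also have "\<dots> = Tinv * M" using i1 M Ti by simp
    finally show ?thesis unfolding X_def .
  qed
  show ?thesis unfolding GX E_def[symmetric] EX
    by (rule eq_matI, insert M Ti X, auto)
qed



lemma rconst_0[simp]: "rconst 0 = 0" unfolding rconst_def by simp
lemma rconst_add: "rconst (a + b) = rconst a + rconst b"
  unfolding rconst_def by (simp flip: to_fract_add)
lemma rconst_mult: "rconst (a * b) = rconst a * rconst b"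
  unfolding rconst_def by (simp flip: to_fract_mult)
lemma rX_nz[simp]: "rX \<noteq> 0" unfolding rX_def by simp

definition psi :: "'a::field poly \<Rightarrow> 'a ratfun" where
  "psi p = poly (map_poly rconst p) (inverse rX)"

lemma psi_0[simp]: "psi 0 = 0" unfolding psi_def by simp

lemma psi_pCons: "psi (pCons a p) = rconst a + inverse rX * psi p"
  unfolding psi_def by (subst Polynomial.map_poly_pCons) simp_all

lemma psi_const[simp]: "psi [:a:] = rconst a"
  using psi_pCons[of a 0] by simp

lemma psi_1[simp]: "psi 1 = 1"
  by (metis psi_const pCons_one rconst_def to_fract_1)

lemma psi_add[simp]: "psi (p + q) = psi p + psi q"
proof -
  have "map_poly rconst (p + q) = map_poly rconst p + map_poly rconst q"
    by (intro poly_eqI) (simp add: coeff_map_poly rconst_add)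
  thus ?thesis unfolding psi_def by simp
qed

lemma psi_smult[simp]: "psi (Polynomial.smult a p) = rconst a * psi p"
proof -
  have "map_poly rconst (Polynomial.smult a p) = Polynomial.smult (rconst a) (map_poly rconst p)"
    by (intro poly_eqI) (simp add: coeff_map_poly rconst_mult)
  thus ?thesis unfolding psi_def by simp
qed

lemma psi_pCons0: "psi (pCons 0 p) = inverse rX * psi p"
  using psi_pCons[of 0 p] by simp

lemma psi_mult[simp]: "psi (p * q) = psi p * psi q"
proof (induction p)
  case 0 thus ?case by simp
next
  case (pCons a p)
  have "psi (pCons a p * q) = rconst a * psi q + inverse rX * psi (p * q)"
    by (simp add: psi_pCons0)
  also have "\<dots> = psi (pCons a p) * psi q" using pCons(2) by (simp add: psi_pCons algebra_simps)
  finally show ?case .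
qed

lemma psi_uminus[simp]: "psi (- p) = - psi p"
  using psi_add[of p "-p"] by (simp add: eq_neg_iff_add_eq_0 add.commute)

lemma psi_diff[simp]: "psi (p - q) = psi p - psi q"
  using psi_add[of p "-q"] by simp

lemma tf_pCons0: "tf (pCons 0 p) = rX * tf p"
proof -
  have "pCons 0 p = [:0,1:] * p" by simp
  thus ?thesis unfolding rX_def by (metis to_fract_mult)
qed

lemma tf_monom: "tf (monom c k) = rconst c * rX ^ k"
  by (induction k) (simp_all add: monom_Suc tf_pCons0 rconst_def monom_0)

lemma psi_reflect: "psi p * rX ^ degree p = tf (reflect_poly p)"
proof (induction p)
  case 0 thus ?case by simp
next
  case (pCons c p)
  show ?case
  proof (cases "p = 0")
    case True thus ?thesis by (simp add: rconst_def)
  next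
    case False
    have "psi (pCons c p) * rX ^ degree (pCons c p) = (rconst c + inverse rX * psi p) * rX ^ Suc (degree p)"
      using False by (simp add: psi_pCons degree_pCons_eq)
    also have "\<dots> = rconst c * rX ^ Suc (degree p) + psi p * rX ^ degree p"
      by (simp add: field_simps)
    also have "\<dots> = tf (reflect_poly (pCons c p))"
      using pCons(2) False by (simp add: reflect_poly_pCons' tf_monom)
    finally show ?thesis .
  qed
qed

lemma psi_eq: "psi p = tf (reflect_poly p) / rX ^ degree p"
  using psi_reflect[of p] by (simp add: field_simps)

lemma psi_nz: "p \<noteq> 0 \<Longrightarrow> psi p \<noteq> 0"
  using psi_reflect[of p] by auto

lemma subst_inv_rep: "subst_inv r = psi (rnum r) / psi (rden r)"
proof -
  define a b where "a = rnum r" and "b = rden r"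
  have b: "b \<noteq> 0" using rrep_div(1) unfolding b_def by blast
  have "subst_inv r = tf (reflect_poly a * monom 1 (degree b)) / tf (reflect_poly b * monom 1 (degree a))"
    unfolding subst_inv_def a_def b_def by (simp add: Fract_conv_to_fract)
  also have "\<dots> = (psi a * rX ^ degree a * rX ^ degree b) / (psi b * rX ^ degree b * rX ^ degree a)"
    by (simp add: tf_monom psi_reflect[symmetric] rconst_def)
  also have "\<dots> = psi a / psi b" using psi_nz[OF b] by (simp add: field_simps)
  finally show ?thesis unfolding a_def b_def .
qed

lemma subst_inv_div: assumes b: "b \<noteq> 0" shows "subst_inv (tf a / tf b) = psi a / psi b"
proof -
  define r where "r = tf a / tf b"
  have rb: "rden r \<noteq> 0" and rr: "r = tf (rnum r) / tf (rden r)" using rrep_div by auto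
  have H: "rnum r * b = a * rden r" using rr rb b tf_eq_div unfolding r_def by metis
  hence "psi (rnum r) * psi b = psi a * psi (rden r)" by (metis psi_mult)
  hence "psi (rnum r) / psi (rden r) = psi a / psi b"
    using psi_nz[OF rb] psi_nz[OF b] by (simp add: frac_eq_eq)
  thus ?thesis unfolding r_def[symmetric] subst_inv_rep .
qed

lemma subst_inv_tf[simp]: "subst_inv (tf a) = psi a"
  using subst_inv_div[of 1 a] by simp

lemma subst_inv_add[simp]: "subst_inv (u + v) = subst_inv u + subst_inv v"
proof -
  obtain a b where ab: "b \<noteq> 0" "u = tf a / tf b" by (rule ratfun_cases)
  obtain c d where cd: "d \<noteq> 0" "v = tf c / tf d" by (rule ratfun_cases)
  have uv: "u + v = tf (a * d + c * b) / tf (b * d)" using ab cd by (simp add: field_simps)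
  have "subst_inv (u + v) = psi (a * d + c * b) / psi (b * d)"
    unfolding uv by (rule subst_inv_div) (use ab cd in simp)
  also have "\<dots> = subst_inv u + subst_inv v"
    unfolding ab(2) cd(2) subst_inv_div[OF ab(1)] subst_inv_div[OF cd(1)]
    using psi_nz[OF ab(1)] psi_nz[OF cd(1)] by (simp add: field_simps)
  finally show ?thesis .
qed

lemma subst_inv_mult[simp]: "subst_inv (u * v) = subst_inv u * subst_inv v"
proof -
  obtain a b where ab: "b \<noteq> 0" "u = tf a / tf b" by (rule ratfun_cases)
  obtain c d where cd: "d \<noteq> 0" "v = tf c / tf d" by (rule ratfun_cases)
  have uv: "u * v = tf (a * c) / tf (b * d)" using ab cd by (simp add: field_simps)
  have "subst_inv (u * v) = psi (a * c) / psi (b * d)"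
    unfolding uv by (rule subst_inv_div) (use ab cd in simp)
  also have "\<dots> = subst_inv u * subst_inv v"
    unfolding ab(2) cd(2) subst_inv_div[OF ab(1)] subst_inv_div[OF cd(1)]
    using psi_nz[OF ab(1)] psi_nz[OF cd(1)] by (simp add: field_simps)
  finally show ?thesis .
qed

lemma subst_inv_0[simp]: "subst_inv 0 = 0" using subst_inv_tf[of 0] by simp

lemma subst_inv_uminus[simp]: "subst_inv (- u) = - subst_inv u"
  using subst_inv_add[of u "-u"] by (simp add: eq_neg_iff_add_eq_0 add.commute)

lemma subst_inv_diff[simp]: "subst_inv (u - v) = subst_inv u - subst_inv v"
  using subst_inv_add[of u "-v"] by simp

lemma subst_inv_sum: "subst_inv (sum f A) = sum (\<lambda>x. subst_inv (f x)) A"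
  by (induction A rule: infinite_finite_induct) auto

lemma rderiv_divide: assumes v: "v \<noteq> 0"
  shows "rderiv (u / v) = (rderiv u * v - u * rderiv v) / (v * v)"
proof -
  have "rderiv u = rderiv ((u / v) * v)" using v by simp
  also have "\<dots> = rderiv (u / v) * v + (u / v) * rderiv v" by (rule rderiv_mult)
  finally have "rderiv u = rderiv (u / v) * v + (u / v) * rderiv v" .
  thus ?thesis using v by (simp add: field_simps)
qed

lemma rderiv_inverse_rX: "rderiv (inverse rX) = - inverse (rX * rX)"
proof -
  have h: "inverse rX = tf 1 / tf [:0,1:]" unfolding rX_def by (simp add: field_simps)
  have "rderiv (inverse rX) = tf (pderiv 1 * [:0,1:] - 1 * pderiv [:0,1:]) / tf ([:0,1:] * [:0,1:])"
    unfolding h by (rule rderiv_div) simp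
  also have "\<dots> = - inverse (rX * rX)" unfolding rX_def to_fract_mult to_fract_diff by (simp add: pderiv_pCons pCons_one divide_inverse)
  finally show ?thesis .
qed

lemma psi_pderiv: "psi (pderiv p) = - (rX * rX) * rderiv (psi p)"
proof (induction p)
  case 0 thus ?case by simp
next
  case (pCons a p)
  have A: "psi (pderiv (pCons a p)) = psi p + inverse rX * psi (pderiv p)"
    by (simp add: pderiv_pCons psi_pCons0)
  have B: "rderiv (psi (pCons a p)) = - inverse (rX * rX) * psi p + inverse rX * rderiv (psi p)"
    by (simp add: psi_pCons rderiv_inverse_rX)
  show ?case unfolding A B pCons(2) by (simp add: field_simps)
qed

lemma subst_inv_rderiv: "subst_inv (rderiv r) = - (rX * rX) * rderiv (subst_inv r)"
proof -
  obtain a b where ab: "b \<noteq> 0" "r = tf a / tf b" by (rule ratfun_cases)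
  have pb: "psi b \<noteq> 0" using psi_nz[OF ab(1)] .
  have dr: "rderiv r = tf (pderiv a * b - a * pderiv b) / tf (b * b)"
    unfolding ab(2) by (rule rderiv_div[OF ab(1)])
  have "subst_inv (rderiv r) = psi (pderiv a * b - a * pderiv b) / psi (b * b)"
    unfolding dr by (rule subst_inv_div) (use ab(1) in simp)
  also have "\<dots> = - (rX * rX) * rderiv (psi a / psi b)"
    unfolding rderiv_divide[OF pb] using pb by (simp add: psi_pderiv field_simps)
  finally show ?thesis unfolding ab(2) subst_inv_div[OF ab(1)] .
qed



lemma at_inf_carrier[simp]: "M \<in> carrier_mat n m \<Longrightarrow> at_infinity_transform M \<in> carrier_mat n m"
  unfolding at_infinity_transform_def by simp

lemma at_inf_dims[simp]: "dim_row (at_infinity_transform M) = dim_row M" "dim_col (at_infinity_transform M) = dim_col M"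
  unfolding at_infinity_transform_def by simp_all

lemma inf_eq:
  assumes M: "M \<in> carrier_mat n n" and T: "T \<in> carrier_mat n n" and MT: "MT \<in> carrier_mat n n"
    and eq: "T * MT = M * T - mat_deriv T"
  shows "map_mat subst_inv T * at_infinity_transform MT
       = at_infinity_transform M * map_mat subst_inv T - mat_deriv (map_mat subst_inv T)"
proof (rule eq_matI)
  let ?s = subst_inv and ?X = "rX * rX :: 'a ratfun"
  have Ts: "map_mat subst_inv T \<in> carrier_mat n n" using T by simp
  fix i j assume "i < dim_row (at_infinity_transform M * map_mat subst_inv T - mat_deriv (map_mat subst_inv T))"
    "j < dim_col (at_infinity_transform M * map_mat subst_inv T - mat_deriv (map_mat subst_inv T))"
  hence ij: "i < n" "j < n" using M T by auto
  have e1: "(\<Sum>l<n. T $$ (i,l) * MT $$ (l,j)) = (\<Sum>l<n. M $$ (i,l) * T $$ (l,j)) - rderiv (T $$ (i,j))"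
  proof -
    have "(T * MT) $$ (i,j) = (M * T - mat_deriv T) $$ (i,j)" using eq by simp
    moreover have "(T * MT) $$ (i,j) = (\<Sum>l<n. T $$ (i,l) * MT $$ (l,j))"
      by (rule mult_entry[OF T MT ij])
    moreover have "(M * T - mat_deriv T) $$ (i,j) = (M * T) $$ (i,j) - rderiv (T $$ (i,j))"
      using M T ij by (simp add: mat_deriv_def)
    moreover have "(M * T) $$ (i,j) = (\<Sum>l<n. M $$ (i,l) * T $$ (l,j))"
      by (rule mult_entry[OF M T ij])
    ultimately show ?thesis by simp
  qed
  have L: "(map_mat subst_inv T * at_infinity_transform MT) $$ (i,j) = - inverse ?X * ?s (\<Sum>l<n. T $$ (i,l) * MT $$ (l,j))"
  proof -
    have "(map_mat subst_inv T * at_infinity_transform MT) $$ (i,j)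
        = (\<Sum>l<n. ?s (T $$ (i,l)) * (- ?s (MT $$ (l,j)) / ?X))"
      using mult_entry[OF Ts at_inf_carrier[OF MT] ij] T MT ij
      by (auto simp: at_infinity_transform_def intro!: sum.cong)
    also have "\<dots> = (\<Sum>l<n. - inverse ?X * (?s (T $$ (i,l)) * ?s (MT $$ (l,j))))"
      by (intro sum.cong) (auto simp: divide_inverse)
    also have "\<dots> = - inverse ?X * ?s (\<Sum>l<n. T $$ (i,l) * MT $$ (l,j))"
      by (simp add: sum_distrib_left subst_inv_sum)
    finally show ?thesis .
  qed
  have R: "(at_infinity_transform M * map_mat subst_inv T - mat_deriv (map_mat subst_inv T)) $$ (i,j)
     = - inverse ?X * ?s (\<Sum>l<n. M $$ (i,l) * T $$ (l,j)) - rderiv (?s (T $$ (i,j)))"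
  proof -
    have "(at_infinity_transform M * map_mat subst_inv T) $$ (i,j)
        = (\<Sum>l<n. (- ?s (M $$ (i,l)) / ?X) * ?s (T $$ (l,j)))"
      using mult_entry[OF at_inf_carrier[OF M] Ts ij] T M ij
      by (auto simp: at_infinity_transform_def intro!: sum.cong)
    also have "\<dots> = (\<Sum>l<n. - inverse ?X * (?s (M $$ (i,l)) * ?s (T $$ (l,j))))"
      by (intro sum.cong) (auto simp: divide_inverse)
    also have "\<dots> = - inverse ?X * ?s (\<Sum>l<n. M $$ (i,l) * T $$ (l,j))"
      by (simp add: sum_distrib_left subst_inv_sum)
    finally have "(at_infinity_transform M * map_mat subst_inv T) $$ (i,j) = - inverse ?X * ?s (\<Sum>l<n. M $$ (i,l) * T $$ (l,j))" .
    thus ?thesis using M T ij by (simp add: mat_deriv_def)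
  qed
  show "(map_mat subst_inv T * at_infinity_transform MT) $$ (i,j)
     = (at_infinity_transform M * map_mat subst_inv T - mat_deriv (map_mat subst_inv T)) $$ (i,j)"
    unfolding L R e1 subst_inv_diff subst_inv_rderiv by (simp add: field_simps)
qed (insert M T MT, auto)

lemma psi_regular_0: assumes "regular_at 0 (psi p)" shows "degree p = 0"
proof (rule ccontr)
  assume d: "degree p \<noteq> 0"
  hence p0: "p \<noteq> 0" by auto
  obtain a b where ab: "poly b 0 \<noteq> 0" "psi p = tf a / tf b" using assms by (rule regularE)
  have "psi p = tf (reflect_poly p) / tf ([:0,1:] ^ degree p)" unfolding psi_eq rX_def by simp
  hence "tf (reflect_poly p) / tf ([:0,1:] ^ degree p) = tf a / tf b" using ab by simp
  moreover have "b \<noteq> 0" using ab by auto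
  ultimately have "reflect_poly p * b = a * [:0,1:] ^ degree p" using tf_eq_div[of "[:0,1:] ^ degree p" b] by simp
  hence "poly (reflect_poly p * b) 0 = poly (a * [:0,1:] ^ degree p) 0" by simp
  hence "lead_coeff p * poly b 0 = 0" using d by (simp add: poly_power)
  thus False using p0 ab(1) by simp
qed

theorem mainTheorem2:
  fixes M T Tinv :: "'a::{alg_closed_field, field_char_0} ratfun mat"
    and n :: nat
    and N :: "'a \<Rightarrow> 'a set"
    and Ninf :: "'a set"
  assumes dims: "M \<in> carrier_mat n n" "T \<in> carrier_mat n n" "Tinv \<in> carrier_mat n n"
    and inv: "T * Tinv = 1\<^sub>m n" "Tinv * T = 1\<^sub>m n"
    and Nnorm: "\<And>x0. is_normalization (N x0)"
    and Ninf_norm: "is_normalization Ninf"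
    and M_norm: "\<And>x0. normalized_at (N x0) x0 M"
    and MT_norm: "\<And>x0. normalized_at (N x0) x0 (gauge M T Tinv)"
  shows "(\<forall>i<n. \<forall>j<n. is_polynomial (T $$ (i, j)) \<and> is_polynomial (Tinv $$ (i, j)))
       \<and> (\<exists>c. c \<noteq> 0 \<and> det T = rconst c)
       \<and> (normalized_at_infinity Ninf M \<and> normalized_at_infinity Ninf (gauge M T Tinv)
            \<longrightarrow> (\<exists>C :: 'a mat. T = map_mat rconst C))"
proof -
  define G where "G = gauge M T Tinv"
  have G: "G \<in> carrier_mat n n" unfolding G_def gauge_def using dims by auto
  have eqT: "T * G = M * T - mat_deriv T" unfolding G_def by (rule gauge_T[OF dims inv(1)])
  have eqTi: "Tinv * M = G * Tinv - mat_deriv Tinv" unfolding G_def by (rule gauge_Tinv[OF dims inv])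
  have regT: "regular_at x0 (T $$ (i,j))" if "i < n" "j < n" for x0 i j
    using core[OF dims(1) G dims(2) _ _ eqT Nnorm[of x0]] M_norm[of x0] MT_norm[of x0] that
    unfolding G_def normalized_at_def by blast
  have regTi: "regular_at x0 (Tinv $$ (i,j))" if "i < n" "j < n" for x0 i j
    using core[OF G dims(1) dims(3) _ _ eqTi Nnorm[of x0]] M_norm[of x0] MT_norm[of x0] that
    unfolding G_def normalized_at_def by blast
  have polT: "is_polynomial (T $$ (i,j))" if "i < n" "j < n" for i j
    using regular_everywhere_poly regT[OF that] by blast
  have polTi: "is_polynomial (Tinv $$ (i,j))" if "i < n" "j < n" for i j
    using regular_everywhere_poly regTi[OF that] by blast
  define P where "P = mat n n (\<lambda>(i,j). SOME p. T $$ (i,j) = tf p)"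
  define Q where "Q = mat n n (\<lambda>(i,j). SOME p. Tinv $$ (i,j) = tf p)"
  have Pij: "T $$ (i,j) = tf (P $$ (i,j))" if "i < n" "j < n" for i j
    using polT[OF that] that unfolding P_def is_polynomial_def by (auto intro: someI_ex)
  have Qij: "Tinv $$ (i,j) = tf (Q $$ (i,j))" if "i < n" "j < n" for i j
    using polTi[OF that] that unfolding Q_def is_polynomial_def by (auto intro: someI_ex)
  have P: "P \<in> carrier_mat n n" and Q: "Q \<in> carrier_mat n n" by (auto simp: P_def Q_def)
  have TP: "T = map_mat tf P" by (rule eq_matI, insert dims P Pij, auto)
  have TQ: "Tinv = map_mat tf Q" by (rule eq_matI, insert dims Q Qij, auto)
  interpret tfh: comm_ring_hom "to_fract :: 'a poly \<Rightarrow> 'a poly fract"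
    by unfold_locales simp_all
  have "det T * det Tinv = 1" using det_mult[OF dims(2) dims(3)] inv(1) by simp
  hence "tf (det P * det Q) = tf 1" unfolding TP TQ by simp
  hence dPQ: "det P * det Q = 1" by (simp only: to_fract_eq_iff)
  hence "is_unit (det P)" by (metis dvd_triv_left)
  then obtain c where c: "det P = [:c:]" using is_unit_poly_iff by blast
  have c0: "c \<noteq> 0" using dPQ c by auto
  have detT: "det T = rconst c" unfolding TP rconst_def by (simp add: c)
  have inf: "\<exists>C :: 'a mat. T = map_mat rconst C"
    if ninf: "normalized_at_infinity Ninf M \<and> normalized_at_infinity Ninf G"
  proof -
    define Ts where "Ts = map_mat subst_inv T"
    have Ts: "Ts \<in> carrier_mat n n" using dims by (simp add: Ts_def)
    have eqI: "Ts * at_infinity_transform G = at_infinity_transform M * Ts - mat_deriv Ts"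
      unfolding Ts_def by (rule inf_eq[OF dims(1) dims(2) G eqT])
    have "\<forall>i<n. \<forall>j<n. regular_at 0 (Ts $$ (i,j))"
      by (rule core[OF at_inf_carrier[OF dims(1)] at_inf_carrier[OF G] Ts _ _ eqI Ninf_norm],
          insert ninf, auto simp: normalized_at_infinity_def fuchsian_at_infinity_def residue_at_infinity_def)
    hence rs: "regular_at 0 (subst_inv (T $$ (i,j)))" if "i < n" "j < n" for i j
      using that dims by (auto simp: Ts_def)
    have deg: "degree (P $$ (i,j)) = 0" if "i < n" "j < n" for i j
    proof -
      have "regular_at 0 (psi (P $$ (i,j)))" using rs[OF that] unfolding Pij[OF that] subst_inv_tf .
      thus ?thesis by (rule psi_regular_0)
    qed
    define C where "C = mat n n (\<lambda>(i,j). coeff (P $$ (i,j)) 0)"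
    have "T = map_mat rconst C"
    proof (rule eq_matI)
      fix i j assume "i < dim_row (map_mat rconst C)" "j < dim_col (map_mat rconst C)"
      hence ij: "i < n" "j < n" by (auto simp: C_def)
      have "P $$ (i,j) = [:coeff (P $$ (i,j)) 0:]" using deg[OF ij] by (metis degree_0_id)
      thus "T $$ (i,j) = map_mat rconst C $$ (i,j)" using Pij[OF ij] ij
        by (simp add: C_def rconst_def)
    qed (insert dims, auto simp: C_def)
    thus ?thesis by blast
  qed
  show ?thesis using polT polTi c0 detT inf unfolding G_def by blast
qed

end
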